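(* Let $G=(V,E)$ be a control flow graph and $p$ a predicate node. If $p$ has at least two successors in $A_p$, then $\{p\}$ is a trivial strongly connected component of $A_p$, and all other nodes of $A_p$ form a single strongly connected component whose induced subgraph is a cycle.
   Context: A control flow graph (CFG) is a finite directed graph $G=(V,E)$ in which every node has at most two outgoing edges; nodes with exactly two outgoing edges are predicate nodes. A path from $n_1$ is a nonempty finite or infinite sequence of nodes with each adjacent pair an edge; it is maximal if it is infinite or its last node has no successor. $V_p$ is the set of nodes occurring on all maximal paths from $p$ in $G$. For $V'\subseteq V$, a $V'$-interval from $x$ to $y$ is a finite path $n_1\ldots n_k$ in $G$ with $k\ge 2$, $n_1=x\in V'$, $n_k=y\in V'$, and $n_i\notin V'$ for $1<i<k$. $A_p$ is the directed graph with node set $V_p$ and an edge $(x,y)$ iff there is a $V_p$-interval from $x$ to $y$ in $G$. An SCC is trivial if its induced subgraph has no edge. A graph is a cycle if it is isomorphic to a graph with nodes $n_1,\ldots,n_k$ ($k>0$) and edges exactly $(n_1,n_2),\ldots,(n_{k-1},n_k),(n_k,n_1)$. *)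

theory Defs
  imports Main
begin

definition succs :: "('a \<times> 'a) set \<Rightarrow> 'a \<Rightarrow> 'a set" where
  "succs E x = {y. (x, y) \<in> E}"

definition cfg :: "'a set \<Rightarrow> ('a \<times> 'a) set \<Rightarrow> bool" where
  "cfg V E \<longleftrightarrow> finite V \<and> E \<subseteq> V \<times> V \<and> (\<forall>x\<in>V. card (succs E x) \<le> 2)"

definition predicate_node :: "'a set \<Rightarrow> ('a \<times> 'a) set \<Rightarrow> 'a \<Rightarrow> bool" where
  "predicate_node V E p \<longleftrightarrow> p \<in> V \<and> card (succs E p) = 2"

definition fpath :: "('a \<times> 'a) set \<Rightarrow> 'a list \<Rightarrow> bool" where
  "fpath E xs \<longleftrightarrow> xs \<noteq> [] \<and> (\<forall>i. Suc i < length xs \<longrightarrow> (xs ! i, xs ! Suc i) \<in> E)"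

definition ipath :: "('a \<times> 'a) set \<Rightarrow> (nat \<Rightarrow> 'a) \<Rightarrow> bool" where
  "ipath E f \<longleftrightarrow> (\<forall>i. (f i, f (Suc i)) \<in> E)"

text \<open>V_p: nodes occurring on all maximal paths from p (finite maximal paths end in a
  node without successor; infinite paths are maximal).\<close>
definition Vp :: "'a set \<Rightarrow> ('a \<times> 'a) set \<Rightarrow> 'a \<Rightarrow> 'a set" where
  "Vp V E p = {v \<in> V.
     (\<forall>xs. fpath E xs \<and> hd xs = p \<and> succs E (last xs) = {} \<longrightarrow> v \<in> set xs) \<and>
     (\<forall>f. ipath E f \<and> f 0 = p \<longrightarrow> v \<in> range f)}"

definition interval :: "('a \<times> 'a) set \<Rightarrow> 'a set \<Rightarrow> 'a \<Rightarrow> 'a \<Rightarrow> bool" where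
  "interval E V' x y \<longleftrightarrow> (\<exists>xs. fpath E xs \<and> length xs \<ge> 2 \<and> hd xs = x \<and> last xs = y \<and>
     x \<in> V' \<and> y \<in> V' \<and> (\<forall>i. 0 < i \<and> i < length xs - 1 \<longrightarrow> xs ! i \<notin> V'))"

text \<open>Edge set of A_p (its node set is Vp V E p).\<close>
definition ApE :: "'a set \<Rightarrow> ('a \<times> 'a) set \<Rightarrow> 'a \<Rightarrow> ('a \<times> 'a) set" where
  "ApE V E p = {(x, y). x \<in> Vp V E p \<and> y \<in> Vp V E p \<and> interval E (Vp V E p) x y}"

definition scc :: "'a set \<Rightarrow> ('a \<times> 'a) set \<Rightarrow> 'a set \<Rightarrow> bool" where
  "scc N R C \<longleftrightarrow> C \<subseteq> N \<and> C \<noteq> {} \<and> (\<forall>x\<in>C. \<forall>y\<in>C. (x, y) \<in> R\<^sup>*) \<and>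
     (\<forall>x\<in>C. \<forall>y\<in>N. (x, y) \<in> R\<^sup>* \<and> (y, x) \<in> R\<^sup>* \<longrightarrow> y \<in> C)"

definition induced :: "('a \<times> 'a) set \<Rightarrow> 'a set \<Rightarrow> ('a \<times> 'a) set" where
  "induced R C = R \<inter> (C \<times> C)"

definition trivial_scc :: "'a set \<Rightarrow> ('a \<times> 'a) set \<Rightarrow> 'a set \<Rightarrow> bool" where
  "trivial_scc N R C \<longleftrightarrow> scc N R C \<and> induced R C = {}"

definition is_cycle :: "'a set \<Rightarrow> ('a \<times> 'a) set \<Rightarrow> bool" where
  "is_cycle N R \<longleftrightarrow> (\<exists>xs. xs \<noteq> [] \<and> distinct xs \<and> set xs = N \<and>
     R = {(xs ! i, xs ! ((i + 1) mod length xs)) | i. i < length xs})"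

end

theory Submission
  imports Defs
begin

lemma fpath_single[simp]: "fpath E [x]"
  by (simp add: fpath_def)

lemma fpath_Cons_Cons[simp]: "fpath E (x # y # ys) \<longleftrightarrow> (x, y) \<in> E \<and> fpath E (y # ys)"
proof
  assume a: "fpath E (x # y # ys)"
  have "(x,y) \<in> E" using a unfolding fpath_def by (metis length_Cons nth_Cons_0 nth_Cons_Suc zero_less_Suc Suc_less_eq)
  moreover have "fpath E (y # ys)" using a unfolding fpath_def by (metis length_Cons nth_Cons_Suc Suc_less_eq list.distinct(1))
  ultimately show "(x, y) \<in> E \<and> fpath E (y # ys)" by simp
next
  assume a: "(x, y) \<in> E \<and> fpath E (y # ys)"
  show "fpath E (x # y # ys)" unfolding fpath_def
  proof (intro conjI allI impI)
    fix i assume "Suc i < length (x # y # ys)"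
    then show "((x # y # ys) ! i, (x # y # ys) ! Suc i) \<in> E"
      using a unfolding fpath_def by (cases i) auto
  qed simp
qed

lemma fpath_Cons: "fpath E (x # xs) \<longleftrightarrow> (xs = [] \<or> ((x, hd xs) \<in> E \<and> fpath E xs))"
  by (cases xs) auto

lemma fpath_append: "fpath E xs \<Longrightarrow> fpath E ys \<Longrightarrow> (last xs, hd ys) \<in> E \<Longrightarrow> fpath E (xs @ ys)"
proof (induction xs)
  case Nil then show ?case by (simp add: fpath_def)
next
  case (Cons a xs)
  then show ?case
  proof (cases xs)
    case Nil
    then show ?thesis using Cons by (cases ys) (auto simp: fpath_Cons)
  next
    case (Cons b zs)
    then show ?thesis using Cons.prems Cons.IH by (auto simp: fpath_Cons)
  qed
qed

lemma fpath_append_tl: "fpath E xs \<Longrightarrow> fpath E ys \<Longrightarrow> last xs = hd ys \<Longrightarrow> fpath E (xs @ tl ys)"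
  by (cases ys; cases "tl ys") (auto intro!: fpath_append simp: fpath_Cons)

lemma fpath_prefix: "fpath E (xs @ ys) \<Longrightarrow> xs \<noteq> [] \<Longrightarrow> fpath E xs"
proof (induction xs)
  case Nil then show ?case by simp
next
  case (Cons a xs)
  then show ?case by (cases xs) (auto simp: fpath_Cons)
qed

lemma fpath_drop: "fpath E xs \<Longrightarrow> j < length xs \<Longrightarrow> fpath E (drop j xs)"
proof (induction xs arbitrary: j)
  case Nil then show ?case by simp
next
  case (Cons a xs)
  then show ?case by (cases j; cases xs) (auto simp: fpath_Cons)
qed

lemma fpath_mono: "fpath F xs \<Longrightarrow> F \<subseteq> E \<Longrightarrow> fpath E xs"
  unfolding fpath_def by blast

lemma fpath_rtrancl: "fpath E xs \<Longrightarrow> v \<in> set xs \<Longrightarrow> (hd xs, v) \<in> E\<^sup>*"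
proof (induction xs)
  case Nil then show ?case by simp
next
  case (Cons a xs)
  show ?case
  proof (cases xs)
    case Nil then show ?thesis using Cons by simp
  next
    case (Cons b zs)
    then show ?thesis using Cons.prems Cons.IH
      by (auto simp: fpath_Cons intro: converse_rtrancl_into_rtrancl)
  qed
qed

lemma rtrancl_fpath: "(a, c) \<in> F\<^sup>* \<Longrightarrow> \<exists>xs. fpath F xs \<and> hd xs = a \<and> last xs = c"
proof (induction rule: converse_rtrancl_induct)
  case base
  then show ?case by (intro exI[of _ "[c]"]) simp
next
  case (step y z)
  then obtain xs where "fpath F xs" "hd xs = z" "last xs = c" by blast
  moreover then have "xs \<noteq> []" by (simp add: fpath_def)
  ultimately show ?case using step
    by (intro exI[of _ "y # xs"]) (auto simp: fpath_Cons)
qed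

lemma fpath_tl_target: "fpath F xs \<Longrightarrow> v \<in> set (tl xs) \<Longrightarrow> \<exists>u. (u, v) \<in> F"
proof (induction xs)
  case Nil then show ?case by simp
next
  case (Cons a xs)
  then show ?case by (cases xs) (auto simp: fpath_Cons)
qed


definition mp :: "('a \<times> 'a) set \<Rightarrow> 'a \<Rightarrow> 'a set \<Rightarrow> bool" where
  "mp E u S \<longleftrightarrow> (\<exists>xs. fpath E xs \<and> hd xs = u \<and> succs E (last xs) = {} \<and> set xs = S) \<or>
     (\<exists>f. ipath E f \<and> f 0 = u \<and> range f = S)"

lemma Vp_iff: "v \<in> Vp V E p \<longleftrightarrow> v \<in> V \<and> (\<forall>S. mp E p S \<longrightarrow> v \<in> S)"
  unfolding Vp_def mp_def by blast

lemma mp_start: "mp E u S \<Longrightarrow> u \<in> S"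
  unfolding mp_def fpath_def by (metis hd_in_set rangeI)

lemma ipath_rtrancl: "ipath E f \<Longrightarrow> (f 0, f j) \<in> E\<^sup>*"
  by (induction j) (auto simp: ipath_def intro: rtrancl_into_rtrancl)

lemma mp_reach: "mp E u S \<Longrightarrow> w \<in> S \<Longrightarrow> (u, w) \<in> E\<^sup>*"
  unfolding mp_def using fpath_rtrancl ipath_rtrancl by fastforce

lemma mp_exists: "\<exists>S. mp E u S"
proof -
  define f where "f = rec_nat u (\<lambda>_ x. SOME y. (x, y) \<in> E)"
  have f0: "f 0 = u" and fS: "\<And>n. f (Suc n) = (SOME y. (f n, y) \<in> E)" by (simp_all add: f_def)
  have step: "\<And>n. succs E (f n) \<noteq> {} \<Longrightarrow> (f n, f (Suc n)) \<in> E"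
    unfolding fS succs_def by (metis (mono_tags, lifting) empty_Collect_eq someI_ex)
  show ?thesis
  proof (cases "\<forall>n. succs E (f n) \<noteq> {}")
    case True
    then have "ipath E f" using step by (simp add: ipath_def)
    then show ?thesis using f0 unfolding mp_def by (intro exI[of _ "range f"] disjI2 exI[of _ f]) simp
  next
    case False
    define n where "n = (LEAST n. succs E (f n) = {})"
    have n1: "succs E (f n) = {}" using False unfolding n_def by (metis (mono_tags, lifting) LeastI)
    have n2: "\<And>i. i < n \<Longrightarrow> succs E (f i) \<noteq> {}" unfolding n_def using not_less_Least by blast
    define xs where "xs = map f [0..<Suc n]"
    have "fpath E xs" unfolding fpath_def xs_def
      using step n2 by (simp del: upt_Suc add: nth_append)
    moreover have "hd xs = u" unfolding xs_def using f0 by (simp add: hd_map del: upt_Suc)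
    moreover have "last xs = f n" unfolding xs_def by simp
    ultimately have "mp E u (set xs)" using n1 unfolding mp_def by (intro disjI1 exI[of _ xs]) simp
    then show ?thesis by blast
  qed
qed

lemma mp_prefix:
  assumes "fpath E xs" "hd xs = u" "last xs = v" "mp E v S"
  shows "mp E u (set xs \<union> S)"
  using assms(4)[unfolded mp_def]
proof (elim disjE exE conjE)
  fix ys assume ys: "fpath E ys" "hd ys = v" "succs E (last ys) = {}" "set ys = S"
  have ne: "xs \<noteq> []" "ys \<noteq> []" using assms(1) ys(1) by (auto simp: fpath_def)
  have "fpath E (xs @ tl ys)" using fpath_append_tl assms ys by metis
  moreover have "hd (xs @ tl ys) = u" using ne assms by simp
  moreover have "last (xs @ tl ys) = last ys"
  proof (cases "tl ys = []")
    case True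
    then have "ys = [hd ys]" using ne(2) by (metis list.collapse)
    then show ?thesis using True assms(3) ys(2) by (metis append_Nil2 last_ConsL)
  next
    case False
    then show ?thesis by (simp add: last_tl)
  qed
  moreover have "set (xs @ tl ys) = set xs \<union> S"
  proof -
    have "set ys = insert (hd ys) (set (tl ys))" using ne(2) by (cases ys) auto
    moreover have "hd ys \<in> set xs" using ne(1) assms(3) ys(2) by auto
    ultimately show ?thesis using ys(4) by auto
  qed
  ultimately show ?thesis using ys(3) unfolding mp_def by (intro disjI1 exI[of _ "xs @ tl ys"]) simp
next
  fix f assume f: "ipath E f" "f 0 = v" "range f = S"
  have ne: "xs \<noteq> []" using assms(1) by (auto simp: fpath_def)
  define L where "L = length xs - 1"
  define g where "g i = (if i < L then xs ! i else f (i - L))" for i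
  have lastL: "xs ! L = v" using ne assms(3) by (simp add: L_def last_conv_nth)
  have "ipath E g" unfolding ipath_def
  proof
    fix i
    show "(g i, g (Suc i)) \<in> E"
    proof (cases "Suc i < L")
      case True then show ?thesis using assms(1) unfolding g_def fpath_def L_def by auto
    next
      case False
      show ?thesis
      proof (cases "Suc i = L")
        case True
        then have gg: "g i = xs ! i" "g (Suc i) = xs ! Suc i" using lastL f(2) by (auto simp: g_def)
        have si: "Suc i < length xs" using True ne by (simp add: L_def)
        show ?thesis using assms(1) si unfolding gg fpath_def by blast
      next
        case False
        then have "g i = f (i - L)" "g (Suc i) = f (Suc (i - L))" using \<open>\<not> Suc i < L\<close>
          by (auto simp: g_def Suc_diff_le)
        then show ?thesis using f(1) by (simp add: ipath_def)
      qed
    qed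
  qed
  moreover have "g 0 = u"
    using ne assms(2) lastL f(2) by (cases "L = 0") (auto simp: g_def hd_conv_nth)
  moreover have "range g = set xs \<union> S"
  proof
    show "range g \<subseteq> set xs \<union> S" unfolding g_def L_def using f(3) by auto
    show "set xs \<union> S \<subseteq> range g"
    proof
      fix w assume "w \<in> set xs \<union> S"
      then show "w \<in> range g"
      proof
        assume "w \<in> set xs"
        then obtain i where i: "i < length xs" "w = xs ! i" by (metis in_set_conv_nth)
        show ?thesis
        proof (cases "i < L")
          case True then show ?thesis using i by (metis g_def rangeI)
        next
          case False
          then have "i = L" using i L_def by auto
          then have "g L = w" using i lastL f(2) by (simp add: g_def)
          then show ?thesis by (metis rangeI)
        qed
      next
        assume "w \<in> S"
        then obtain j where "w = f j" using f(3) by auto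
        then have "g (L + j) = w" by (simp add: g_def)
        then show ?thesis by (metis rangeI)
      qed
    qed
  qed
  ultimately show ?thesis unfolding mp_def by (intro disjI2 exI[of _ g]) simp
qed

lemma mp_suffix:
  assumes "mp E v S" "w \<in> S"
  shows "\<exists>S'. S' \<subseteq> S \<and> mp E w S'"
  using assms(1)[unfolded mp_def]
proof (elim disjE exE conjE)
  fix xs assume xs: "fpath E xs" "hd xs = v" "succs E (last xs) = {}" "set xs = S"
  then obtain j where j: "j < length xs" "xs ! j = w" using assms(2) by (metis in_set_conv_nth)
  have "fpath E (drop j xs)" using fpath_drop xs j by blast
  moreover have "hd (drop j xs) = w" using j by (simp add: hd_drop_conv_nth)
  moreover have "last (drop j xs) = last xs" using j by simp
  moreover have "set (drop j xs) \<subseteq> S" using xs(4) by (metis set_drop_subset)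
  ultimately have "mp E w (set (drop j xs))" using xs(3) unfolding mp_def by (intro disjI1 exI[of _ "drop j xs"]) simp
  then show ?thesis using \<open>set (drop j xs) \<subseteq> S\<close> unfolding mp_def by (intro exI[of _ "set (drop j xs)"]) simp
next
  fix f assume f: "ipath E f" "f 0 = v" "range f = S"
  then obtain j where j: "f j = w" using assms(2) by auto
  have "ipath E (\<lambda>i. f (i + j))" using f(1) by (simp add: ipath_def)
  moreover have "range (\<lambda>i. f (i + j)) \<subseteq> S" using f(3) by auto
  ultimately have "mp E w (range (\<lambda>i. f (i + j)))" using j unfolding mp_def by (intro disjI2 exI[of _ "\<lambda>i. f (i + j)"]) simp
  then show ?thesis using \<open>range (\<lambda>i. f (i + j)) \<subseteq> S\<close> unfolding mp_def by (intro exI[of _ "range (\<lambda>i. f (i + j))"]) simp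
qed

lemma mp_cycle:
  assumes "fpath E xs" "length xs \<ge> 2" "hd xs = v" "last xs = v"
  shows "mp E v (set xs)"
proof -
  define L where "L = length xs - 1"
  have L: "L \<ge> 1" "L < length xs" using assms(2) by (auto simp: L_def)
  have ne: "xs \<noteq> []" using assms(2) by auto
  have lastL: "xs ! L = xs ! 0" using assms(3,4) ne by (simp add: L_def hd_conv_nth last_conv_nth)
  define g where "g i = xs ! (i mod L)" for i
  have "ipath E g" unfolding ipath_def
  proof
    fix i
    have m: "i mod L < L" using L by auto
    have mm: "Suc (i mod L) < length xs" using m L by linarith
    have e: "(xs ! (i mod L), xs ! Suc (i mod L)) \<in> E" using assms(1) mm unfolding fpath_def by blast
    show "(g i, g (Suc i)) \<in> E"
    proof (cases "Suc (i mod L) < L")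
      case True
      then have "Suc i mod L = Suc (i mod L)" by (metis mod_Suc nat_neq_iff)
      then show ?thesis using e by (simp add: g_def)
    next
      case False
      then have "Suc (i mod L) = L" using m by auto
      then have "Suc i mod L = 0" by (metis mod_Suc mod_self)
      then show ?thesis using e lastL \<open>Suc (i mod L) = L\<close> by (simp add: g_def)
    qed
  qed
  moreover have "g 0 = v" using assms(3) ne by (simp add: g_def hd_conv_nth)
  moreover have "range g = set xs"
  proof
    have "\<And>i. i mod L < length xs" using L by (meson less_le_trans mod_less_divisor less_imp_le_nat not_less zero_less_one)
    then show "range g \<subseteq> set xs" unfolding g_def by auto
    show "set xs \<subseteq> range g"
    proof
      fix w assume "w \<in> set xs"
      then obtain i where i: "i < length xs" "w = xs ! i" by (metis in_set_conv_nth)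
      show "w \<in> range g"
      proof (cases "i < L")
        case True then have "g i = w" using i by (simp add: g_def)
        then show ?thesis by (metis rangeI)
      next
        case False then have "i = L" using i L_def by auto
        then have "g 0 = w" using i lastL by (simp add: g_def)
        then show ?thesis by (metis rangeI)
      qed
    qed
  qed
  ultimately show ?thesis unfolding mp_def by (intro disjI2 exI[of _ g]) simp
qed


lemma fpath_suffix: "fpath E (xs @ ys) \<Longrightarrow> ys \<noteq> [] \<Longrightarrow> fpath E ys"
proof (induction xs)
  case Nil then show ?case by simp
next
  case (Cons a xs)
  then show ?case by (cases "xs @ ys") (auto simp: fpath_Cons)
qed

lemma interval_iff:
  "interval E W x y \<longleftrightarrow> x \<in> W \<and> y \<in> W \<and>
     (\<exists>zs. fpath E (x # zs) \<and> zs \<noteq> [] \<and> last zs = y \<and> (\<forall>v\<in>set (butlast zs). v \<notin> W))"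
proof
  assume "interval E W x y"
  then obtain xs where xs: "fpath E xs" "length xs \<ge> 2" "hd xs = x" "last xs = y" "x \<in> W" "y \<in> W"
    "\<forall>i. 0 < i \<and> i < length xs - 1 \<longrightarrow> xs ! i \<notin> W"
    unfolding interval_def by blast
  obtain zs where zs: "xs = x # zs" using xs(2,3) by (cases xs) auto
  have ne: "zs \<noteq> []" using xs(2) zs by auto
  have "\<forall>v\<in>set (butlast zs). v \<notin> W"
  proof
    fix v assume "v \<in> set (butlast zs)"
    then obtain k where k: "k < length (butlast zs)" "v = butlast zs ! k" by (metis in_set_conv_nth)
    have "v = xs ! Suc k" using k zs by (simp add: nth_butlast)
    moreover have "0 < Suc k \<and> Suc k < length xs - 1" using k zs by simp
    ultimately show "v \<notin> W" using xs(7) by blast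
  qed
  then show "x \<in> W \<and> y \<in> W \<and>
     (\<exists>zs. fpath E (x # zs) \<and> zs \<noteq> [] \<and> last zs = y \<and> (\<forall>v\<in>set (butlast zs). v \<notin> W))"
    using xs zs ne by auto
next
  assume "x \<in> W \<and> y \<in> W \<and>
     (\<exists>zs. fpath E (x # zs) \<and> zs \<noteq> [] \<and> last zs = y \<and> (\<forall>v\<in>set (butlast zs). v \<notin> W))"
  then obtain zs where zs: "x \<in> W" "y \<in> W" "fpath E (x # zs)" "zs \<noteq> []" "last zs = y"
     "\<forall>v\<in>set (butlast zs). v \<notin> W" by blast
  have "\<forall>i. 0 < i \<and> i < length (x # zs) - 1 \<longrightarrow> (x # zs) ! i \<notin> W"
  proof (intro allI impI)
    fix i assume i: "0 < i \<and> i < length (x # zs) - 1"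
    then obtain k where k: "i = Suc k" by (cases i) auto
    have "(x # zs) ! i = butlast zs ! k" using i k by (simp add: nth_butlast)
    moreover have "k < length (butlast zs)" using i k by simp
    ultimately show "(x # zs) ! i \<notin> W" using zs(6) by (metis nth_mem)
  qed
  then show "interval E W x y" unfolding interval_def using zs
    by (intro exI[of _ "x # zs"]) (auto simp: Suc_le_eq)
qed

lemma avoid2:
  assumes "(a, c) \<in> E\<^sup>*"
  shows "(a, c) \<in> {(u, v). (u, v) \<in> E \<and> v \<noteq> a \<and> v \<noteq> b}\<^sup>* \<or>
         (b, c) \<in> {(u, v). (u, v) \<in> E \<and> v \<noteq> a \<and> v \<noteq> b}\<^sup>*"
  using assms
proof (induction rule: rtrancl_induct)
  case base then show ?case by simp
next
  case (step d c)
  show ?case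
  proof (cases "c = a \<or> c = b")
    case True then show ?thesis by auto
  next
    case False
    then have "(d, c) \<in> {(u, v). (u, v) \<in> E \<and> v \<noteq> a \<and> v \<noteq> b}" using step by auto
    then show ?thesis using step.IH by (meson rtrancl_into_rtrancl)
  qed
qed

lemma cyc_contra:
  assumes fp: "fpath E (u # zs)" "zs \<noteq> []" "last zs = z" "z' \<notin> set zs"
    and rt: "(z, u) \<in> F\<^sup>*" and F: "F \<subseteq> E" "\<And>a b. (a, b) \<in> F \<Longrightarrow> b \<noteq> z'"
    and nu: "z' \<noteq> u" and all: "\<And>S. mp E u S \<Longrightarrow> z' \<in> S"
  shows False
proof -
  obtain rs where rs: "fpath F rs" "hd rs = z" "last rs = u" using rtrancl_fpath[OF rt] by blast
  have rne: "rs \<noteq> []" using rs(1) by (simp add: fpath_def)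
  have rsE: "fpath E rs" using fpath_mono rs(1) F(1) by blast
  define cyc where "cyc = (u # zs) @ tl rs"
  have c1: "fpath E cyc" unfolding cyc_def using fpath_append_tl[OF fp(1) rsE] fp(2,3) rs(2) by simp
  have c2: "length cyc \<ge> 2" unfolding cyc_def using fp(2) by (cases zs) auto
  have c3: "hd cyc = u" unfolding cyc_def by simp
  have c4: "last cyc = u"
  proof (cases "tl rs = []")
    case True
    then have "rs = [hd rs]" using rne by (metis list.collapse)
    then have "u = z" using rs by (metis last_ConsL)
    then show ?thesis using True fp(2,3) unfolding cyc_def by simp
  next
    case False
    then show ?thesis unfolding cyc_def using rs(3) by (simp add: last_tl)
  qed
  have "z' \<notin> set (tl rs)"
    using fpath_tl_target[OF rs(1)] F(2) by blast
  then have "z' \<notin> set cyc" unfolding cyc_def using nu fp(4) by simp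
  moreover have "mp E u (set cyc)" using mp_cycle[OF c1 c2 c3 c4] .
  ultimately show False using all by blast
qed

lemma first_W:
  "ys \<noteq> [] \<Longrightarrow> last ys \<in> W \<Longrightarrow>
   \<exists>zs rest. ys = zs @ rest \<and> zs \<noteq> [] \<and> last zs \<in> W \<and> (\<forall>v\<in>set (butlast zs). v \<notin> W)"
proof (induction ys)
  case Nil then show ?case by simp
next
  case (Cons y ys)
  show ?case
  proof (cases "y \<in> W")
    case True
    then show ?thesis by (intro exI[of _ "[y]"] exI[of _ ys]) simp
  next
    case False
    then have ne: "ys \<noteq> []" using Cons.prems by auto
    then have "last ys \<in> W" using Cons.prems by simp
    then obtain zs rest where zr: "ys = zs @ rest" "zs \<noteq> []" "last zs \<in> W" "\<forall>v\<in>set (butlast zs). v \<notin> W"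
      using Cons.IH ne by blast
    show ?thesis
      using zr False by (intro exI[of _ "y # zs"] exI[of _ rest]) simp
  qed
qed

lemma path_to_A:
  assumes A: "\<And>x zs. x \<in> W \<Longrightarrow> fpath E (x # zs) \<Longrightarrow> zs \<noteq> [] \<Longrightarrow> last zs \<in> W \<Longrightarrow>
      (\<forall>v\<in>set (butlast zs). v \<notin> W) \<Longrightarrow> (x, last zs) \<in> A"
  shows "fpath E (x # ys) \<Longrightarrow> x \<in> W \<Longrightarrow> last (x # ys) \<in> W \<Longrightarrow> (x, last (x # ys)) \<in> A\<^sup>*"
proof (induction "length ys" arbitrary: x ys rule: less_induct)
  case less
  show ?case
  proof (cases "ys = []")
    case True then show ?thesis by simp
  next
    case False
    then have lW: "last ys \<in> W" using less.prems by simp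
    obtain zs rest where zr: "ys = zs @ rest" "zs \<noteq> []" "last zs \<in> W" "\<forall>v\<in>set (butlast zs). v \<notin> W"
      using first_W[OF False lW] by blast
    have "fpath E (x # zs)" using less.prems(1) zr(1) fpath_prefix[of E "x # zs" rest] by simp
    then have e: "(x, last zs) \<in> A" using A less.prems(2) zr by blast
    show ?thesis
    proof (cases "rest = []")
      case True then show ?thesis using e zr by simp
    next
      case False
      have eq: "x # ys = (x # butlast zs) @ (last zs # rest)" using zr by simp
      have fp: "fpath E (last zs # rest)" using fpath_suffix less.prems(1) eq by (metis list.distinct(1))
      have "length rest < length ys" using zr by simp
      then have "(last zs, last (last zs # rest)) \<in> A\<^sup>*"
        using less.hyps[of rest "last zs"] fp zr(3) False lW zr(1) by simp
      moreover have "last (last zs # rest) = last (x # ys)" using False zr by simp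
      ultimately show ?thesis using e by (metis converse_rtrancl_into_rtrancl)
    qed
  qed
qed


lemma card2_obtain:
  assumes "card S \<ge> 2"
  obtains a b where "a \<in> S" "b \<in> S" "a \<noteq> b"
proof -
  have fin: "finite S" using assms by (metis card.infinite not_numeral_le_zero)
  then have "S \<noteq> {}" using assms by auto
  then obtain a where a: "a \<in> S" by blast
  have "card (S - {a}) \<ge> 1" using assms a fin by (simp add: card_Diff_singleton)
  then have "S - {a} \<noteq> {}" by (metis card.empty not_one_le_zero)
  then obtain b where "b \<in> S - {a}" by blast
  then show ?thesis using that a by blast
qed

theorem lemma4p8:
  fixes V :: "'a set" and E :: "('a \<times> 'a) set" and p :: 'a
  assumes "cfg V E"
    and "predicate_node V E p"
    and "card (succs (ApE V E p) p) \<ge> 2"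
  shows "trivial_scc (Vp V E p) (ApE V E p) {p}
       \<and> scc (Vp V E p) (ApE V E p) (Vp V E p - {p})
       \<and> is_cycle (Vp V E p - {p}) (induced (ApE V E p) (Vp V E p - {p}))"
proof -
  define W where "W = Vp V E p"
  define A where "A = ApE V E p"
  define W' where "W' = W - {p}"
  have pV: "p \<in> V" using assms(2) unfolding predicate_node_def by blast
  have Wall: "v \<in> S" if "v \<in> W" "mp E p S" for v S using that unfolding W_def Vp_iff by simp
  have pW: "p \<in> W" unfolding W_def Vp_iff using pV by (simp add: mp_start)
  have Aiff: "(x, y) \<in> A \<longleftrightarrow> x \<in> W \<and> y \<in> W \<and>
      (\<exists>zs. fpath E (x # zs) \<and> zs \<noteq> [] \<and> last zs = y \<and> (\<forall>v\<in>set (butlast zs). v \<notin> W))" for x y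
  proof -
    have "(x, y) \<in> A \<longleftrightarrow> x \<in> W \<and> y \<in> W \<and> interval E W x y" unfolding A_def ApE_def W_def by simp
    then show ?thesis using interval_iff[of E W x y] by argo
  qed
  have AD: "\<exists>zs. fpath E (x # zs) \<and> zs \<noteq> [] \<and> last zs = y \<and> (\<forall>v\<in>set (butlast zs). v \<notin> W)"
    if "(x, y) \<in> A" for x y using that[unfolded Aiff] by (elim conjE)
  have AWW: "x \<in> W" "y \<in> W" if "(x, y) \<in> A" for x y using that[unfolded Aiff] by simp_all
  have AI: "(x, last zs) \<in> A" if "x \<in> W" "fpath E (x # zs)" "zs \<noteq> []" "last zs \<in> W"
    "\<forall>v\<in>set (butlast zs). v \<notin> W" for x zs
    unfolding Aiff using that by blast
  have AE: "(x, y) \<in> E\<^sup>*" if xyA: "(x, y) \<in> A" for x y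
  proof -
    obtain zs where zs: "fpath E (x # zs)" "zs \<noteq> []" "last zs = y" using AD[OF xyA] by blast
    have "y \<in> set (x # zs)" using last_in_set[OF zs(2)] zs(3) by simp
    then show ?thesis using fpath_rtrancl[OF zs(1)] by simp
  qed
  have AsE: "(x, y) \<in> E\<^sup>*" if "(x, y) \<in> A\<^sup>*" for x y
    using that
  proof (induction rule: rtrancl_induct)
    case base then show ?case by simp
  next
    case (step y z) show ?case by (rule rtrancl_trans[OF step.IH AE[OF step.hyps(2)]])
  qed
  have setW: "v = y" if "zs \<noteq> []" "last zs = y" "\<forall>v\<in>set (butlast zs). v \<notin> W" "v \<in> set zs" "v \<in> W"
    for zs y v
  proof -
    have "v \<in> set (butlast zs @ [last zs])" using that(1,4) by simp
    then show ?thesis using that(2,3,5) by auto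
  qed
  have "card (succs A p) \<ge> 2" using assms(3) unfolding A_def .
  then obtain y1 y2 where y: "(p, y1) \<in> A" "(p, y2) \<in> A" "y1 \<noteq> y2"
    by (rule card2_obtain) (auto simp: succs_def)
  have y1W: "y1 \<in> W" and y2W: "y2 \<in> W" using y AWW by auto
  have nopp: "(p, p) \<notin> A"
  proof
    assume "(p, p) \<in> A"
    then obtain zs where zs: "fpath E (p # zs)" "zs \<noteq> []" "last zs = p" "\<forall>v\<in>set (butlast zs). v \<notin> W"
      using AD[OF \<open>(p, p) \<in> A\<close>] by blast
    have mpc: "mp E p (set (p # zs))" using mp_cycle[OF zs(1)] zs(2,3) by (cases zs) auto
    have vp: "v = p" if vW: "v \<in> W" for v
    proof -
      have "v \<in> set (p # zs)" using Wall[OF vW mpc] .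
      then have "v = p \<or> v \<in> set zs" by simp
      then show "v = p" using setW[OF zs(2,3,4) _ vW] by blast
    qed
    show False using vp[OF y1W] vp[OF y2W] y(3) by simp
  qed
  have y1p: "y1 \<noteq> p" and y2p: "y2 \<noteq> p" using y nopp by auto
  have y1W': "y1 \<in> W'" and y2W': "y2 \<in> W'" using y1W y2W y1p y2p by (auto simp: W'_def)
  define P where "P u \<longleftrightarrow> (\<forall>S. mp E u S \<longrightarrow> W' \<subseteq> S)" for u
  have Py: "P y" if pyA: "(p, y) \<in> A" "y \<noteq> p" for y
    unfolding P_def
  proof (intro allI impI subsetI)
    fix S w assume S: "mp E y S" and w: "w \<in> W'"
    obtain zs where zs: "fpath E (p # zs)" "zs \<noteq> []" "last zs = y" "\<forall>v\<in>set (butlast zs). v \<notin> W"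
      using AD[OF pyA(1)] by blast
    have "mp E p (set (p # zs) \<union> S)" using mp_prefix[OF zs(1) _ _ S] zs(2,3) by simp
    moreover have wW: "w \<in> W" "w \<noteq> p" using w by (simp_all add: W'_def)
    ultimately have "w \<in> set (p # zs) \<union> S" using Wall by blast
    moreover have "w \<in> set zs \<Longrightarrow> w = y" using setW[OF zs(2,3,4) _ wW(1)] by blast
    moreover have "y \<in> S" using mp_start S .
    ultimately show "w \<in> S" using wW(2) by auto
  qed
  have Py1: "P y1" and Py2: "P y2" using Py y y1p y2p by auto
  have Pstep: "P v" if "P u" "(u, v) \<in> E" for u v
    unfolding P_def
  proof (intro allI impI)
    fix S assume S: "mp E v S"
    have "fpath E [u, v]" using that(2) by simp
    then have "mp E u (set [u, v] \<union> S)" using mp_prefix[of E "[u, v]" u v S] S by simp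
    then have "W' \<subseteq> set [u, v] \<union> S" using that(1) unfolding P_def by blast
    then have sub: "W' \<subseteq> {u, v} \<union> S" by simp
    have vS: "v \<in> S" using mp_start S .
    show "W' \<subseteq> S"
    proof (cases "u \<in> W'")
      case False then show ?thesis using sub vS by blast
    next
      case True
      obtain yy where yy: "yy \<in> {y1, y2}" "yy \<noteq> u" using y(3) by blast
      have "P yy" using yy Py1 Py2 by blast
      have "yy \<in> W'" using yy y1W' y2W' by blast
      then have "yy \<in> S" using sub yy vS by blast
      then obtain S' where "S' \<subseteq> S" "mp E yy S'" using mp_suffix[OF S] by blast
      then show ?thesis using \<open>P yy\<close> unfolding P_def by blast
    qed
  qed
  have PD: "W' \<subseteq> S" if "P u" "mp E u S" for u S using that unfolding P_def by blast
  have PR: "P u" if "(y1, u) \<in> E\<^sup>*" for u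
    using that
  proof (induction rule: rtrancl_induct)
    case base then show ?case using Py1 .
  next
    case (step a b) then show ?case using Pstep by blast
  qed
  have W'R: "(y1, w) \<in> E\<^sup>*" if "w \<in> W'" for w
  proof -
    obtain S where S: "mp E y1 S" using mp_exists[of E y1] by (elim exE)
    have "w \<in> S" using subsetD[OF PD[OF Py1 S] that] .
    then show ?thesis using mp_reach[OF S] by simp
  qed
  have PW': "P x" if "x \<in> W'" for x using PR[OF W'R[OF that]] .
  have noret: False if ab: "(p, a) \<in> A" "(p, b) \<in> A" "a \<noteq> b" "b \<noteq> p"
     and F: "F \<subseteq> E" "\<And>a' b'. (a', b') \<in> F \<Longrightarrow> b' \<noteq> b" and rt: "(a, p) \<in> F\<^sup>*" for a b F
  proof -
    obtain zs where zs: "fpath E (p # zs)" "zs \<noteq> []" "last zs = a" "\<forall>v\<in>set (butlast zs). v \<notin> W"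
      using AD[OF ab(1)] by blast
    have bW: "b \<in> W" using AWW(2)[OF ab(2)] .
    have "b \<notin> set zs"
    proof
      assume "b \<in> set zs"
      then have "b = a" using setW[OF zs(2,3,4) _ bW] by simp
      then show False using ab(3) by simp
    qed
    then show False using cyc_contra[OF zs(1,2,3) _ rt F(1) F(2) ab(4) Wall[OF bW]] by simp
  qed
  have pnR: "(y1, p) \<notin> E\<^sup>*"
  proof
    assume "(y1, p) \<in> E\<^sup>*"
    from avoid2[OF this, of y2] show False
    proof
      assume h: "(y1, p) \<in> {(u, v). (u, v) \<in> E \<and> v \<noteq> y1 \<and> v \<noteq> y2}\<^sup>*"
      show False by (rule noret[OF y(1,2,3) y2p _ _ h]) auto
    next
      assume h: "(y2, p) \<in> {(u, v). (u, v) \<in> E \<and> v \<noteq> y1 \<and> v \<noteq> y2}\<^sup>*"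
      show False by (rule noret[OF y(2,1) y(3)[symmetric] y1p _ _ h]) auto
    qed
  qed
  have Rnp: "u \<noteq> p" if "(y1, u) \<in> E\<^sup>*" for u
  proof
    assume "u = p" then show False using that pnR by simp
  qed
  have AW': "y \<in> W'" if "x \<in> W'" "(x, y) \<in> A" for x y
  proof -
    have "(y1, y) \<in> E\<^sup>*" using W'R[OF that(1)] AE[OF that(2)] by (rule rtrancl_trans)
    then have "y \<noteq> p" by (rule Rnp)
    then show ?thesis using AWW(2)[OF that(2)] by (simp add: W'_def)
  qed
  have noloop: "(x, x) \<notin> A" if x: "x \<in> W'" for x
  proof
    assume "(x, x) \<in> A"
    then obtain zs where zs: "fpath E (x # zs)" "zs \<noteq> []" "last zs = x" "\<forall>v\<in>set (butlast zs). v \<notin> W"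
      using AD[OF \<open>(x, x) \<in> A\<close>] by blast
    have "mp E x (set (x # zs))" using mp_cycle[OF zs(1)] zs(2,3) by (cases zs) auto
    then have sub: "W' \<subseteq> set (x # zs)" using PD[OF PW'[OF x]] by simp
    have vx: "v = x" if v: "v \<in> W'" for v
    proof -
      have "v = x \<or> v \<in> set zs" using subsetD[OF sub v] by simp
      moreover have "v \<in> W" using v by (simp add: W'_def)
      ultimately show "v = x" using setW[OF zs(2,3,4)] by blast
    qed
    show False using vx[OF y1W'] vx[OF y2W'] y(3) by simp
  qed
  have uniq: "z1 = z2" if x: "x \<in> W'" and z: "(x, z1) \<in> A" "(x, z2) \<in> A" for x z1 z2
  proof (rule ccontr)
    assume ne: "z1 \<noteq> z2"
    have sub: False if ab: "(x, a) \<in> A" "(x, b) \<in> A" "a \<noteq> b"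
      and F: "F \<subseteq> E" "\<And>a' b'. (a', b') \<in> F \<Longrightarrow> b' \<noteq> b" and rt: "(a, x) \<in> F\<^sup>*" for a b F
    proof -
      obtain zs where zs: "fpath E (x # zs)" "zs \<noteq> []" "last zs = a" "\<forall>v\<in>set (butlast zs). v \<notin> W"
        using AD[OF ab(1)] by blast
      have bW': "b \<in> W'" using AW'[OF x ab(2)] .
      then have bW: "b \<in> W" by (simp add: W'_def)
      have bx: "b \<noteq> x"
      proof
        assume "b = x" then show False using noloop[OF x] ab(2) by simp
      qed
      have "b \<notin> set zs"
      proof
        assume "b \<in> set zs"
        then have "b = a" using setW[OF zs(2,3,4) _ bW] by simp
        then show False using ab(3) by simp
      qed
      moreover have bS: "b \<in> S" if "mp E x S" for S using subsetD[OF PD[OF PW'[OF x] that] bW'] .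
      ultimately show False using cyc_contra[OF zs(1,2,3) _ rt F(1) F(2) bx bS] by simp
    qed
    have z1W': "z1 \<in> W'" using AW'[OF x z(1)] .
    have "(z1, x) \<in> E\<^sup>*"
    proof -
      obtain S where S: "mp E z1 S" using mp_exists[of E z1] by (elim exE)
      have "(y1, z1) \<in> E\<^sup>*" using W'R[OF z1W'] .
      then have "x \<in> S" using subsetD[OF PD[OF PR S] x] by simp
      then show ?thesis using mp_reach[OF S] by simp
    qed
    from avoid2[OF this, of z2] show False
    proof
      assume h: "(z1, x) \<in> {(u, v). (u, v) \<in> E \<and> v \<noteq> z1 \<and> v \<noteq> z2}\<^sup>*"
      show False by (rule sub[OF z(1,2) ne _ _ h]) auto
    next
      assume h: "(z2, x) \<in> {(u, v). (u, v) \<in> E \<and> v \<noteq> z1 \<and> v \<noteq> z2}\<^sup>*"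
      show False by (rule sub[OF z(2,1) ne[symmetric] _ _ h]) auto
    qed
  qed
  have exs: "\<exists>z. (x, z) \<in> A" if x: "x \<in> W'" for x
  proof -
    obtain S where S: "mp E x S" using mp_exists[of E x] by (elim exE)
    obtain yy where yy: "yy \<in> {y1, y2}" "yy \<noteq> x" using y(3) by blast
    have yyW': "yy \<in> W'" using yy y1W' y2W' by blast
    have "yy \<in> S" using subsetD[OF PD[OF PW'[OF x] S] yyW'] .
    then have "(x, yy) \<in> E\<^sup>*" using mp_reach[OF S] by simp
    then obtain xs where xs: "fpath E xs" "hd xs = x" "last xs = yy" using rtrancl_fpath[of x yy E] by blast
    have "xs \<noteq> []" using xs(1) by (simp add: fpath_def)
    then obtain ys where ys: "xs = x # ys" using xs(2) by (cases xs) auto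
    have ysne: "ys \<noteq> []" using ys xs(3) yy(2) by auto
    have "last ys \<in> W" using ys ysne xs(3) yyW' by (simp add: W'_def)
    then obtain zs rest where zr: "ys = zs @ rest" "zs \<noteq> []" "last zs \<in> W" "\<forall>v\<in>set (butlast zs). v \<notin> W"
      using first_W[OF ysne] by blast
    have fz: "fpath E (x # zs)" using xs(1) ys zr(1) fpath_prefix[of E "x # zs" rest] by simp
    have xW: "x \<in> W" using x by (simp add: W'_def)
    have "(x, last zs) \<in> A" using AI[OF xW fz zr(2,3,4)] .
    then show ?thesis by (rule exI)
  qed
  have EA: "(x, w) \<in> A\<^sup>*" if xw: "x \<in> W" "w \<in> W" "(x, w) \<in> E\<^sup>*" for x w
  proof -
    obtain xs where xs: "fpath E xs" "hd xs = x" "last xs = w" using rtrancl_fpath[OF xw(3)] by blast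
    have "xs \<noteq> []" using xs(1) by (simp add: fpath_def)
    then obtain ys where ys: "xs = x # ys" using xs(2) by (cases xs) auto
    have "(x, last (x # ys)) \<in> A\<^sup>*"
      by (rule path_to_A[of W E A, OF AI]) (use xs ys xw in auto)
    then show ?thesis using xs ys by simp
  qed
  have conn: "(x, w) \<in> A\<^sup>*" if "x \<in> W'" "w \<in> W'" for x w
  proof -
    obtain S where S: "mp E x S" using mp_exists[of E x] by (elim exE)
    have "w \<in> S" using subsetD[OF PD[OF PW'[OF that(1)] S] that(2)] .
    then have "(x, w) \<in> E\<^sup>*" using mp_reach[OF S] by simp
    then show ?thesis using EA that by (simp add: W'_def)
  qed
  have noback: "(x, p) \<notin> A\<^sup>*" if "x \<in> W'" for x
  proof
    assume "(x, p) \<in> A\<^sup>*"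
    then have "(x, p) \<in> E\<^sup>*" by (rule AsE)
    then have "(y1, p) \<in> E\<^sup>*" using W'R[OF that] by (rule rtrancl_trans[rotated])
    then show False using pnR by simp
  qed
  have part1: "trivial_scc W A {p}"
    unfolding trivial_scc_def scc_def induced_def
  proof (intro conjI)
    show "{p} \<subseteq> W" using pW by simp
    show "\<forall>x\<in>{p}. \<forall>y\<in>W. (x, y) \<in> A\<^sup>* \<and> (y, x) \<in> A\<^sup>* \<longrightarrow> y \<in> {p}"
      using noback by (auto simp: W'_def)
    show "A \<inter> {p} \<times> {p} = {}" using nopp by auto
  qed auto
  have part2: "scc W A W'"
    unfolding scc_def
  proof (intro conjI)
    show "W' \<subseteq> W" by (auto simp: W'_def)
    show "W' \<noteq> {}" using y1W' by blast
    show "\<forall>x\<in>W'. \<forall>y\<in>W'. (x, y) \<in> A\<^sup>*" using conn by blast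
    show "\<forall>x\<in>W'. \<forall>y\<in>W. (x, y) \<in> A\<^sup>* \<and> (y, x) \<in> A\<^sup>* \<longrightarrow> y \<in> W'"
      using noback by (auto simp: W'_def)
  qed
  have part3: "is_cycle W' (induced A W')"
  proof -
    define s where "s x = (SOME z. (x, z) \<in> A)" for x
    have sA: "(x, s x) \<in> A" if "x \<in> W'" for x unfolding s_def using exs[OF that] by (rule someI_ex)
    have sW: "s x \<in> W'" if "x \<in> W'" for x using AW'[OF that sA[OF that]] .
    have sU: "z = s x" if "x \<in> W'" "(x, z) \<in> A" for x z using uniq[OF that(1) that(2) sA[OF that(1)]] .
    have spow: "(s ^^ k) x \<in> W'" if x: "x \<in> W'" for x k
    proof (induction k)
      case 0 show ?case using x by simp
    next
      case (Suc k) then show ?case using sW by simp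
    qed
    have orbit: "\<exists>k. w = (s ^^ k) x" if x: "x \<in> W'" and xw: "(x, w) \<in> A\<^sup>*" for x w
      using xw
    proof (induction rule: rtrancl_induct)
      case base show ?case by (rule exI[of _ 0]) simp
    next
      case (step d c)
      then obtain k where k: "d = (s ^^ k) x" by blast
      have dW: "d \<in> W'" using spow[OF x] k by simp
      have "c = s d" using sU[OF dW step.hyps(2)] .
      then show ?case using k by (intro exI[of _ "Suc k"]) simp
    qed
    have exm: "\<exists>m. 0 < m \<and> (s ^^ m) y1 = y1"
    proof -
      have "(s y1, y1) \<in> A\<^sup>*" using conn[OF sW[OF y1W'] y1W'] .
      then obtain k where "y1 = (s ^^ k) (s y1)" using orbit[OF sW[OF y1W']] by blast
      moreover have "(s ^^ Suc k) y1 = (s ^^ k) (s y1)" by (simp only: funpow_Suc_right o_apply)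
      ultimately have "(s ^^ Suc k) y1 = y1" by simp
      then show ?thesis by (intro exI[of _ "Suc k"]) simp
    qed
    define m where "m = (LEAST m. 0 < m \<and> (s ^^ m) y1 = y1)"
    have mm: "0 < m \<and> (s ^^ m) y1 = y1" unfolding m_def by (rule LeastI_ex) (rule exm)
    have m1: "0 < m" and m2: "(s ^^ m) y1 = y1" using mm by simp_all
    have mmin: "(s ^^ j) y1 \<noteq> y1" if j: "0 < j" "j < m" for j
    proof -
      have "\<not> (0 < j \<and> (s ^^ j) y1 = y1)"
        using not_less_Least[of j "\<lambda>m. 0 < m \<and> (s ^^ m) y1 = y1"] j(2) unfolding m_def by simp
      then show ?thesis using j(1) by simp
    qed
    have red: "\<exists>j<m. (s ^^ k) y1 = (s ^^ j) y1" for k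
    proof (induction k)
      case 0 show ?case using m1 by (intro exI[of _ 0]) simp
    next
      case (Suc k)
      then obtain j where j: "j < m" "(s ^^ k) y1 = (s ^^ j) y1" by blast
      have sj: "(s ^^ Suc k) y1 = (s ^^ Suc j) y1" using j(2) by simp
      show ?case
      proof (cases "Suc j < m")
        case True then show ?thesis using sj by (intro exI[of _ "Suc j"]) simp
      next
        case False then have "Suc j = m" using j(1) by simp
        then have "(s ^^ Suc k) y1 = (s ^^ 0) y1" using sj m2 by simp
        then show ?thesis using m1 by (intro exI[of _ 0]) simp
      qed
    qed
    have dist: "(s ^^ i) y1 \<noteq> (s ^^ j) y1" if ij: "i < j" "j < m" for i j
    proof
      assume eq: "(s ^^ i) y1 = (s ^^ j) y1"
      define d where "d = m - j"
      have md: "m = d + j" using ij by (simp add: d_def)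
      have "(s ^^ (d + i)) y1 = (s ^^ d) ((s ^^ i) y1)" by (simp add: funpow_add)
      also have "\<dots> = (s ^^ d) ((s ^^ j) y1)" using eq by simp
      also have "\<dots> = (s ^^ (d + j)) y1" by (simp add: funpow_add)
      also have "\<dots> = y1" using m2 md by simp
      finally have "(s ^^ (d + i)) y1 = y1" .
      moreover have "0 < d + i" using ij md by simp
      moreover have "d + i < m" using ij md by simp
      ultimately show False using mmin by simp
    qed
    define xs where "xs = map (\<lambda>k. (s ^^ k) y1) [0..<m]"
    have len: "length xs = m" by (simp add: xs_def)
    have nth: "xs ! i = (s ^^ i) y1" if "i < m" for i using that by (simp add: xs_def)
    have xsne: "xs \<noteq> []" using m1 len by auto
    have dxs: "distinct xs"
    proof -
      have "inj_on (\<lambda>k. (s ^^ k) y1) {0..<m}"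
      proof (rule inj_onI)
        fix i j assume ij: "i \<in> {0..<m}" "j \<in> {0..<m}" "(s ^^ i) y1 = (s ^^ j) y1"
        show "i = j"
        proof (rule ccontr)
          assume "i \<noteq> j"
          then have "i < j \<or> j < i" by arith
          moreover have "i < m" "j < m" using ij(1,2) by simp_all
          ultimately show False using dist[of i j] dist[of j i] ij(3) by auto
        qed
      qed
      then show ?thesis unfolding xs_def by (simp add: distinct_map)
    qed
    have setxs: "set xs = W'"
    proof
      show "set xs \<subseteq> W'" unfolding xs_def using spow[OF y1W'] by auto
      show "W' \<subseteq> set xs"
      proof
        fix w assume w: "w \<in> W'"
        obtain k where k: "w = (s ^^ k) y1" using orbit[OF y1W' conn[OF y1W' w]] by blast
        obtain j where j: "j < m" "(s ^^ k) y1 = (s ^^ j) y1" using red[of k] by blast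
        have "w = xs ! j" using k j nth by simp
        then show "w \<in> set xs" using j(1) len by simp
      qed
    qed
    have nxt: "xs ! ((i + 1) mod m) = s (xs ! i)" if i: "i < m" for i
    proof (cases "Suc i < m")
      case True
      then show ?thesis using nth i by simp
    next
      case False
      then have im: "Suc i = m" using i by simp
      then have "(i + 1) mod m = 0" by simp
      then have "xs ! ((i + 1) mod m) = y1" using nth[OF m1] by simp
      also have "y1 = (s ^^ Suc i) y1" using m2 im by simp
      also have "\<dots> = s (xs ! i)" using nth[OF i] by simp
      finally show ?thesis .
    qed
    have rel: "induced A W' = {(xs ! i, xs ! ((i + 1) mod length xs)) | i. i < length xs}"
      unfolding induced_def len
    proof (intro equalityI subsetI)
      fix e assume "e \<in> A \<inter> W' \<times> W'"
      then obtain a b where e: "e = (a, b)" "(a, b) \<in> A" "a \<in> W'" by auto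
      have "a \<in> set xs" using e(3) setxs by simp
      then obtain i where i: "i < length xs" "a = xs ! i" by (metis in_set_conv_nth)
      have "b = s a" using sU[OF e(3) e(2)] .
      then have "b = xs ! ((i + 1) mod m)" using nxt i len by simp
      then have "e = (xs ! i, xs ! ((i + 1) mod m)) \<and> i < m" using e(1) i len by simp
      then show "e \<in> {(xs ! i, xs ! ((i + 1) mod m)) | i. i < m}" by blast
    next
      fix e assume "e \<in> {(xs ! i, xs ! ((i + 1) mod m)) | i. i < m}"
      then obtain i where i: "i < m" "e = (xs ! i, xs ! ((i + 1) mod m))" by blast
      have aW: "xs ! i \<in> W'" using nth_mem[of i xs] i(1) len setxs by simp
      have "e = (xs ! i, s (xs ! i))" using i nxt by simp
      then show "e \<in> A \<inter> W' \<times> W'" using sA[OF aW] sW[OF aW] aW by simp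
    qed
    show ?thesis unfolding is_cycle_def by (intro exI[of _ xs] conjI xsne dxs setxs rel)
  qed
  show ?thesis using part1 part2 part3 unfolding W_def A_def W'_def by simp
qed

end
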